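(* Let $k$ be a field of characteristic zero and let $A=k[x,y]/(x^a,y^b)$ with $a,b\in\{0,1,2,\dots\}\cup\{\infty\}$ (a Clements-Lindström ring of embedding dimension two). Then every homogeneous ideal $I$ of $A$ (not necessarily monomial) has the strong Lefschetz property as a graded $A$-module.
   Context: Here $x^\infty$ (resp. $y^\infty$) is interpreted as $0$, so e.g. $a=\infty$ means no power of $x$ is imposed as a relation. $A$ is standard graded. A graded $A$-module $M=\bigoplus_i M_i$ with finite-dimensional graded pieces has the strong Lefschetz property if there exists a linear form $\ell\in A_1$ such that the multiplication map $\times\ell^d\colon M_i\to M_{i+d}$ has maximal rank (is injective or surjective) for all $d>0$ and all $i$. *)

theory Defs
  imports "HOL-Computational_Algebra.Polynomial" "HOL-Library.Extended_Nat"
begin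

text \<open>Bivariate polynomials k[x,y] are modelled as 'k poly poly: the outer variable is y,
  the inner variable is x, so the coefficient of x^i y^j in p is coeff (coeff p j) i.\<close>

definition cx :: "'k::comm_ring_1 poly poly \<Rightarrow> nat \<Rightarrow> nat \<Rightarrow> 'k" where
  "cx p i j = coeff (coeff p j) i"

definition var_x :: "'k::comm_ring_1 poly poly" where
  "var_x = [:[:0, 1:]:]"

definition var_y :: "'k::comm_ring_1 poly poly" where
  "var_y = [:0, 1:]"

text \<open>Truncation k[x,y] -> A = k[x,y]/(x^a, y^b): kill all monomials x^i y^j with
  i \<ge> a or j \<ge> b (a, b = \<infinity> means no relation). Elements of A are represented by
  their unique normal forms.\<close>

definition trunc :: "enat \<Rightarrow> enat \<Rightarrow> 'k::comm_ring_1 poly poly \<Rightarrow> 'k poly poly" where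
  "trunc a b p = (\<Sum>j\<le>degree p. monom (\<Sum>i\<le>degree (coeff p j).
       if enat i < a \<and> enat j < b then monom (coeff (coeff p j) i) i else 0) j)"

definition CL_ring :: "enat \<Rightarrow> enat \<Rightarrow> 'k::comm_ring_1 poly poly set" where
  "CL_ring a b = {p. trunc a b p = p}"

definition CL_mult :: "enat \<Rightarrow> enat \<Rightarrow> 'k::comm_ring_1 poly poly \<Rightarrow> 'k poly poly \<Rightarrow> 'k poly poly" where
  "CL_mult a b p q = trunc a b (p * q)"

definition homogeneous :: "nat \<Rightarrow> 'k::comm_ring_1 poly poly \<Rightarrow> bool" where
  "homogeneous d p \<longleftrightarrow> (\<forall>i j. cx p i j \<noteq> 0 \<longrightarrow> i + j = d)"

definition homog_part :: "nat \<Rightarrow> 'k::comm_ring_1 poly poly \<Rightarrow> 'k poly poly" where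
  "homog_part d p = (\<Sum>j\<le>d. monom (monom (coeff (coeff p j) (d - j)) (d - j)) j)"

definition CL_homog_ideal :: "enat \<Rightarrow> enat \<Rightarrow> 'k::comm_ring_1 poly poly set \<Rightarrow> bool" where
  "CL_homog_ideal a b I \<longleftrightarrow>
     I \<subseteq> CL_ring a b \<and> 0 \<in> I \<and>
     (\<forall>p\<in>I. \<forall>q\<in>I. p + q \<in> I) \<and>
     (\<forall>r\<in>CL_ring a b. \<forall>p\<in>I. CL_mult a b r p \<in> I) \<and>
     (\<forall>p\<in>I. \<forall>d. homog_part d p \<in> I)"

definition graded_piece :: "'k::comm_ring_1 poly poly set \<Rightarrow> nat \<Rightarrow> 'k poly poly set" where
  "graded_piece M d = {p \<in> M. homogeneous d p}"

definition strong_lefschetz :: "enat \<Rightarrow> enat \<Rightarrow> 'k::comm_ring_1 poly poly set \<Rightarrow> bool" where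
  "strong_lefschetz a b M \<longleftrightarrow>
     (\<exists>l \<in> graded_piece (CL_ring a b) 1.
        \<forall>d>0. \<forall>i. inj_on (\<lambda>f. trunc a b (l ^ d * f)) (graded_piece M i) \<or>
                  (\<lambda>f. trunc a b (l ^ d * f)) ` graded_piece M i = graded_piece M (i + d))"

end

theory Submission
  imports Defs
begin


interpretation pv: vector_space "smult :: 'a::field \<Rightarrow> 'a poly \<Rightarrow> 'a poly"
  by unfold_locales (auto simp: smult_add_right smult_add_left)

lemma pv_linear_iff: "module_hom (smult :: 'a::field \<Rightarrow> 'a poly \<Rightarrow> 'a poly) smult f \<longleftrightarrow>
   (\<forall>x y. f (x + y) = f x + f y) \<and> (\<forall>c x. f (smult c x) = smult c (f x))"
  by (auto simp: module_hom_iff pv.module_axioms)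

lemma deriv_kernel_deg:
  fixes u p0 :: "'a::field_char_0 poly"
  assumes p0: "p0 \<noteq> 0" and u: "u \<noteq> 0" and eq: "pderiv u * p0 = u * pderiv p0"
  shows "degree u = degree p0"
proof (cases "degree p0 = 0")
  case True
  then have "pderiv p0 = 0" by (simp add: pderiv_eq_0_iff)
  with eq p0 have "pderiv u = 0" by simp
  then have "degree u = 0" by (simp add: pderiv_eq_0_iff)
  with True show ?thesis by simp
next
  case False
  show ?thesis
  proof (cases "degree u = 0")
    case True
    then have "pderiv u = 0" by (simp add: pderiv_eq_0_iff)
    with eq u have "pderiv p0 = 0" by simp
    then have "degree p0 = 0" by (simp add: pderiv_eq_0_iff)
    with False show ?thesis by simp
  next
    case F2: False
    let ?du = "degree u" and ?dp = "degree p0"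
    have d1: "degree (pderiv u) = ?du - 1" by (simp add: degree_pderiv)
    have d2: "degree (pderiv p0) = ?dp - 1" by (simp add: degree_pderiv)
    have c1: "coeff (pderiv u) (?du - 1) = of_nat ?du * lead_coeff u"
      using F2 by (simp add: coeff_pderiv)
    have c2: "coeff (pderiv p0) (?dp - 1) = of_nat ?dp * lead_coeff p0"
      using False by (simp add: coeff_pderiv)
    have "coeff (pderiv u * p0) ((?du - 1) + ?dp) = of_nat ?du * lead_coeff u * lead_coeff p0"
      using coeff_mult_degree_sum[of "pderiv u" p0] d1 c1 by simp
    moreover have "coeff (u * pderiv p0) (?du + (?dp - 1)) = lead_coeff u * (of_nat ?dp * lead_coeff p0)"
      using coeff_mult_degree_sum[of u "pderiv p0"] d2 c2 by simp
    moreover have "(?du - 1) + ?dp = ?du + (?dp - 1)" using F2 False by simp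
    ultimately have "of_nat ?du * lead_coeff u * lead_coeff p0 = lead_coeff u * (of_nat ?dp * lead_coeff p0)"
      using eq by metis
    then have "(of_nat ?du :: 'a) = of_nat ?dp" using u p0 by simp
    then show ?thesis by simp
  qed
qed

lemma deriv_kernel:
  fixes u p0 :: "'a::field_char_0 poly"
  assumes p0: "p0 \<noteq> 0" and eq: "pderiv u * p0 = u * pderiv p0"
  shows "\<exists>\<beta>. u = smult \<beta> p0"
proof (cases "u = 0")
  case True then show ?thesis by (intro exI[of _ 0]) simp
next
  case False
  have du: "degree u = degree p0" using deriv_kernel_deg[OF p0 False eq] .
  define \<beta> where "\<beta> = lead_coeff u / lead_coeff p0"
  define w where "w = u - smult \<beta> p0"
  have eqw: "pderiv w * p0 = w * pderiv p0"
    unfolding w_def using eq by (simp add: pderiv_diff pderiv_smult algebra_simps)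
  have cw: "coeff w (degree p0) = 0"
    unfolding w_def \<beta>_def using p0 du by simp
  have "w = 0"
  proof (rule ccontr)
    assume "w \<noteq> 0"
    then have "degree w = degree p0" using deriv_kernel_deg[OF p0 _ eqw] by simp
    with cw \<open>w \<noteq> 0\<close> show False by (metis leading_coeff_0_iff)
  qed
  then show ?thesis unfolding w_def by auto
qed

definition Dop :: "'a::field poly \<Rightarrow> 'a poly \<Rightarrow> 'a poly" where
  "Dop p0 p = pderiv p * p0 - p * pderiv p0"

lemma Dop_hom: "module_hom smult smult (Dop p0)"
  unfolding pv_linear_iff Dop_def by (auto simp: pderiv_add pderiv_smult algebra_simps)

lemma dvd_pderiv_power:
  fixes p :: "'a::field poly"
  assumes "r ^ Suc m dvd p"
  shows "r ^ m dvd pderiv p"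
proof -
  obtain q where p: "p = r ^ Suc m * q" using assms by blast
  have "pderiv p = pderiv (r ^ Suc m) * q + r ^ Suc m * pderiv q"
    unfolding p by (simp add: pderiv_mult)
  moreover have "pderiv (r ^ Suc m) = smult (of_nat (Suc m)) (r ^ m) * pderiv r"
    by (rule pderiv_power_Suc)
  moreover have "r ^ m dvd smult (of_nat (Suc m)) (r ^ m) * pderiv r * q"
    by (simp add: dvd_smult)
  moreover have "r ^ m dvd r ^ Suc m * pderiv q"
    by (simp add: power_Suc2 mult.assoc)
  ultimately show ?thesis by simp
qed


lemma Dop_self: "Dop p0 p0 = 0" by (simp add: Dop_def mult.commute)

lemma lemmaG_aux:
  fixes B :: "'a::field_char_0 poly set"
  shows "finite B \<Longrightarrow> pv.independent B \<Longrightarrow> card B = m \<Longrightarrow>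
    finite {c. \<exists>p\<in>pv.span B. p \<noteq> 0 \<and> [:-c,1:] ^ m dvd p}"
proof (induction m arbitrary: B)
  case 0
  then have "B = {}" by simp
  then show ?case by simp
next
  case (Suc m)
  then obtain p0 where p0B: "p0 \<in> B" by (metis card.empty ex_in_conv nat.distinct(1))
  define B' where "B' = B - {p0}"
  have B: "B = insert p0 B'" using p0B B'_def by auto
  have p0nB': "p0 \<notin> B'" by (simp add: B'_def)
  have fB': "finite B'" using Suc.prems B'_def by simp
  have cB': "card B' = m" using Suc.prems B'_def p0B by simp
  have indB': "pv.independent B'" using Suc.prems(2) B pv.independent_mono by blast
  have p0span: "p0 \<notin> pv.span B'"
  proof -
    have "pv.independent (insert p0 B')" using Suc.prems(2) B by simp
    then show ?thesis using p0nB' by (simp add: pv.independent_insert)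
  qed
  have p0nz: "p0 \<noteq> 0" using Suc.prems(2) p0B pv.dependent_zero by blast
  interpret D: module_hom smult smult "Dop p0" by (rule Dop_hom)
  have injD: "inj_on (Dop p0) (pv.span B')"
  proof (subst D.inj_on_iff_eq_0)
    show "pv.subspace (pv.span B')" by simp
    show "\<forall>x\<in>pv.span B'. Dop p0 x = 0 \<longrightarrow> x = 0"
    proof (intro ballI impI)
      fix x assume x: "x \<in> pv.span B'" and Dx: "Dop p0 x = 0"
      then have "pderiv x * p0 = x * pderiv p0" by (simp add: Dop_def)
      then obtain \<beta> where xb: "x = smult \<beta> p0" using deriv_kernel[OF p0nz] by blast
      show "x = 0"
      proof (rule ccontr)
        assume "x \<noteq> 0"
        then have "\<beta> \<noteq> 0" using xb by auto
        then have "p0 = smult (inverse \<beta>) x" using xb by simp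
        then have "p0 \<in> pv.span B'" using x pv.span_scale by metis
        with p0span show False by simp
      qed
    qed
  qed
  have indD: "pv.independent (Dop p0 ` B')"
    using D.independent_injective_image[OF indB' injD] .
  have cD: "card (Dop p0 ` B') = m"
    using card_image[OF inj_on_subset[OF injD pv.span_superset]] cB' by simp
  have finD: "finite {c. \<exists>p\<in>pv.span (Dop p0 ` B'). p \<noteq> 0 \<and> [:-c,1:] ^ m dvd p}"
    using Suc.IH[OF _ indD cD] fB' by simp
  have finR: "finite {c. poly p0 c = 0}" using poly_roots_finite[OF p0nz] .
  have sub: "{c. \<exists>p\<in>pv.span B. p \<noteq> 0 \<and> [:-c,1:] ^ Suc m dvd p} \<subseteq>
     {c. poly p0 c = 0} \<union> {c. \<exists>p\<in>pv.span (Dop p0 ` B'). p \<noteq> 0 \<and> [:-c,1:] ^ m dvd p}"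
  proof
    fix c assume "c \<in> {c. \<exists>p\<in>pv.span B. p \<noteq> 0 \<and> [:-c,1:] ^ Suc m dvd p}"
    then obtain p where p: "p \<in> pv.span B" "p \<noteq> 0" "[:-c,1:] ^ Suc m dvd p" by blast
    show "c \<in> {c. poly p0 c = 0} \<union> {c. \<exists>p\<in>pv.span (Dop p0 ` B'). p \<noteq> 0 \<and> [:-c,1:] ^ m dvd p}"
    proof (cases "poly p0 c = 0")
      case True then show ?thesis by simp
    next
      case False
      from p(1) obtain k where k: "p - smult k p0 \<in> pv.span B'"
        unfolding B pv.span_breakdown_eq by blast
      define p' where "p' = p - smult k p0"
      have Dp: "Dop p0 p' = Dop p0 p"
        unfolding p'_def by (simp add: D.diff D.scale Dop_self)
      have "Dop p0 p' \<in> pv.span (Dop p0 ` B')"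
        using k p'_def D.span_image by blast
      moreover have "[:-c,1:] ^ m dvd Dop p0 p"
      proof -
        have h1: "[:-c,1:] ^ m dvd pderiv p" using dvd_pderiv_power[OF p(3)] .
        have "[:-c,1:] ^ m dvd [:-c,1:] ^ Suc m" by (rule le_imp_power_dvd) simp
        then have h2: "[:-c,1:] ^ m dvd p" using p(3) dvd_trans by blast
        show ?thesis unfolding Dop_def using h1 h2 by (intro dvd_diff dvd_mult2)
      qed
      moreover have "Dop p0 p \<noteq> 0"
      proof
        assume "Dop p0 p = 0"
        then have "Dop p0 p' = 0" using Dp by simp
        moreover have "Dop p0 0 = 0" by (rule D.zero)
        moreover have "p' \<in> pv.span B'" using k p'_def by simp
        moreover have "(0::'a poly) \<in> pv.span B'" by (rule pv.span_zero)
        ultimately have "p' = 0" using injD unfolding inj_on_def by metis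
        then have pe: "p = smult k p0" using p'_def by simp
        then have "k \<noteq> 0" using p(2) by auto
        have "[:-c,1:] dvd [:-c,1:] ^ Suc m" by (rule dvd_power) simp_all
        then have "[:-c,1:] dvd p" using p(3) dvd_trans by blast
        then have "[:-c,1:] dvd p0" using pe \<open>k \<noteq> 0\<close> by (simp add: dvd_smult_iff)
        then show False using False by (simp add: poly_eq_0_iff_dvd)
      qed
      ultimately show ?thesis using Dp by auto
    qed
  qed
  show ?case using finite_subset[OF sub] finD finR by blast
qed



lemma helperH:
  fixes M S :: "'a::field poly set"
  assumes fM: "finite M" and iS: "pv.independent S" and SM: "S \<subseteq> pv.span M"
    and c: "card M \<le> card S"
  shows "pv.span M \<subseteq> pv.span S"
proof
  fix x assume xM: "x \<in> pv.span M"
  show "x \<in> pv.span S"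
  proof (rule ccontr)
    assume xS: "x \<notin> pv.span S"
    have fS: "finite S" using pv.independent_span_bound[OF fM iS SM] by simp
    have "x \<notin> S" using xS pv.span_base by blast
    have i2: "pv.independent (insert x S)" using iS xS by (simp add: pv.independent_insert)
    have "insert x S \<subseteq> pv.span M" using SM xM by simp
    then have "card (insert x S) \<le> card M" using pv.independent_span_bound[OF fM i2] by simp
    then show False using c fS \<open>x \<notin> S\<close> by simp
  qed
qed

lemma poly_mod_hom: "module_hom smult smult (\<lambda>q::'a::field poly. q mod r)"
  unfolding pv_linear_iff by (simp add: poly_mod_add_left mod_smult_left)

lemma monos_span_degree:
  fixes q :: "'a::field poly"
  assumes "degree q < m \<or> q = 0"
  shows "q \<in> pv.span ((\<lambda>k. monom 1 k) ` {..<m})"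
proof -
  have "q = (\<Sum>k<m. smult (coeff q k) (monom 1 k))"
  proof (rule poly_eqI)
    fix n
    have "coeff (\<Sum>k<m. smult (coeff q k) (monom 1 k)) n = (\<Sum>k<m. if k = n then coeff q k else 0)"
      by (simp add: coeff_sum coeff_monom if_distrib cong: if_cong)
    also have "\<dots> = (if n < m then coeff q n else 0)" by (simp add: sum.delta)
    also have "\<dots> = coeff q n"
    proof (cases "n < m")
      case False
      then have "degree q < n \<or> q = 0" using assms by auto
      then show ?thesis using False coeff_eq_0 by auto
    qed simp
    finally show "coeff q n = coeff (\<Sum>k<m. smult (coeff q k) (monom 1 k)) n" by simp
  qed
  also have "\<dots> \<in> pv.span ((\<lambda>k. monom 1 k) ` {..<m})"
    by (intro pv.span_sum pv.span_scale pv.span_base) auto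
  finally show ?thesis .
qed

lemma lemmaF2:
  fixes B :: "'a::field poly set"
  assumes fB: "finite B" and iB: "pv.independent B"
    and good: "\<forall>v\<in>pv.span B. v \<noteq> 0 \<longrightarrow> \<not> [:-c,1:] ^ card B dvd v"
  shows "\<exists>v\<in>pv.span B. [:-c,1:] ^ card B dvd (q - v)"
proof -
  let ?r = "[:-c,1:] ^ card B :: 'a poly"
  let ?m = "card B"
  interpret T: module_hom smult smult "\<lambda>q::'a poly. q mod ?r" by (rule poly_mod_hom)
  have r0: "?r \<noteq> 0" by simp
  have dr: "degree ?r = ?m" by (simp add: degree_power_eq)
  have injT: "inj_on (\<lambda>q. q mod ?r) (pv.span B)"
  proof (subst T.inj_on_iff_eq_0)
    show "pv.subspace (pv.span B)" by simp
    show "\<forall>x\<in>pv.span B. x mod ?r = 0 \<longrightarrow> x = 0" using good by (auto simp: mod_eq_0_iff_dvd)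
  qed
  have iTB: "pv.independent ((\<lambda>q. q mod ?r) ` B)" using T.independent_injective_image[OF iB injT] .
  have cTB: "card ((\<lambda>q. q mod ?r) ` B) = ?m"
    using card_image[OF inj_on_subset[OF injT pv.span_superset]] by simp
  have modin: "x mod ?r \<in> pv.span ((\<lambda>k. monom 1 k) ` {..<?m})" for x
    using degree_mod_less[OF r0, of x] dr by (intro monos_span_degree) auto
  have sub: "(\<lambda>q. q mod ?r) ` B \<subseteq> pv.span ((\<lambda>k. monom 1 k) ` {..<?m})" using modin by auto
  have cM: "card ((\<lambda>k. monom 1 k :: 'a poly) ` {..<?m}) \<le> ?m"
    using card_image_le[of "{..<?m}"] by simp
  have "pv.span ((\<lambda>k. monom 1 k) ` {..<?m}) \<subseteq> pv.span ((\<lambda>q. q mod ?r) ` B)"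
    using helperH[OF _ iTB sub] cM cTB by simp
  also have "\<dots> = (\<lambda>q. q mod ?r) ` pv.span B" by (rule T.span_image)
  finally have "q mod ?r \<in> (\<lambda>q. q mod ?r) ` pv.span B" using modin by blast
  then obtain v where v: "v \<in> pv.span B" "q mod ?r = v mod ?r" by blast
  then have "(q - v) mod ?r = 0" by (simp add: poly_mod_diff_left)
  then show ?thesis using v(1) by (auto simp: mod_eq_0_iff_dvd)
qed



definition inwin :: "nat \<Rightarrow> nat \<Rightarrow> nat \<Rightarrow> nat \<Rightarrow> bool" where
  "inwin a b n j \<longleftrightarrow> j \<le> n \<and> n < a + j \<and> j < b"

definition Aw :: "nat \<Rightarrow> nat \<Rightarrow> nat \<Rightarrow> 'a::comm_ring_1 poly set" where
  "Aw a b n = {p. \<forall>j. coeff p j \<noteq> 0 \<longrightarrow> inwin a b n j}"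

definition Wn :: "nat \<Rightarrow> nat \<Rightarrow> nat \<Rightarrow> 'a::comm_ring_1 poly \<Rightarrow> 'a poly" where
  "Wn a b n p = (\<Sum>j\<in>{j. inwin a b n j}. monom (coeff p j) j)"

definition pr :: "nat \<Rightarrow> 'a::comm_ring_1 poly \<Rightarrow> 'a poly \<Rightarrow> 'a" where
  "pr b g f = coeff (g * f) (b - 1)"

lemma finite_win: "finite {j. inwin a b n j}"
  by (rule finite_subset[of _ "{..n}"]) (auto simp: inwin_def)

lemma coeff_Wn: "coeff (Wn a b n p) k = (if inwin a b n k then coeff p k else 0)"
proof -
  have "coeff (Wn a b n p) k = (\<Sum>j\<in>{j. inwin a b n j}. if j = k then coeff p j else 0)"
    unfolding Wn_def by (simp add: coeff_sum coeff_monom if_distrib cong: if_cong)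
  also have "\<dots> = (if inwin a b n k then coeff p k else 0)"
    using finite_win[of a b n] by (simp add: sum.delta')
  finally show ?thesis .
qed

lemma Wn_add: "Wn a b n (p + q) = Wn a b n p + Wn a b n q"
  by (rule poly_eqI) (simp add: coeff_Wn)
lemma Wn_smult: "Wn a b n (smult c p) = smult c (Wn a b n p)"
  by (rule poly_eqI) (simp add: coeff_Wn)
lemma Wn_diff: "Wn a b n (p - q) = Wn a b n p - Wn a b n q"
  by (rule poly_eqI) (simp add: coeff_Wn)
lemma Wn_0[simp]: "Wn a b n 0 = 0"
  by (rule poly_eqI) (simp add: coeff_Wn)

lemma Wn_in_Aw: "Wn a b n p \<in> Aw a b n"
  by (auto simp: Aw_def coeff_Wn split: if_splits)

lemma Aw_degree: "p \<in> Aw a b n \<Longrightarrow> degree p \<le> n"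
  by (rule degree_le) (auto simp: Aw_def inwin_def)

lemma Aw_big: "a + b - 2 < n \<Longrightarrow> Aw a b n = {0}"
  by (auto simp: Aw_def inwin_def intro!: poly_eqI)

lemma Aw_subspace: "pv.subspace (Aw a b n)"
  unfolding pv.subspace_def Aw_def
proof (intro conjI allI impI ballI)
  fix x y :: "'a poly" and j
  assume x: "x \<in> {p. \<forall>j. coeff p j \<noteq> 0 \<longrightarrow> inwin a b n j}" and y: "y \<in> {p. \<forall>j. coeff p j \<noteq> 0 \<longrightarrow> inwin a b n j}"
  show "x + y \<in> {p. \<forall>j. coeff p j \<noteq> 0 \<longrightarrow> inwin a b n j}"
  proof (intro CollectI allI impI)
    fix j assume "coeff (x + y) j \<noteq> 0"
    then have "coeff x j \<noteq> 0 \<or> coeff y j \<noteq> 0" by auto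
    then show "inwin a b n j" using x y by auto
  qed
qed auto

lemma Wn_Aw: "p \<in> Aw a b n \<Longrightarrow> Wn a b n p = p"
  by (rule poly_eqI) (auto simp: coeff_Wn Aw_def)

definition mons :: "nat \<Rightarrow> nat \<Rightarrow> nat \<Rightarrow> 'a::field poly set" where
  "mons a b n = (\<lambda>j. monom 1 j) ` {j. inwin a b n j}"

lemma Aw_span: "Aw a b n = pv.span (mons a b n :: 'a::field poly set)"
proof
  show "Aw a b n \<subseteq> pv.span (mons a b n :: 'a poly set)"
  proof
    fix p :: "'a poly" assume p: "p \<in> Aw a b n"
    have "p = Wn a b n p" using Wn_Aw[OF p] by simp
    also have "\<dots> = (\<Sum>j\<in>{j. inwin a b n j}. smult (coeff p j) (monom 1 j))"
      unfolding Wn_def by (simp add: smult_monom)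
    also have "\<dots> \<in> pv.span (mons a b n)"
      unfolding mons_def by (intro pv.span_sum pv.span_scale pv.span_base) auto
    finally show "p \<in> pv.span (mons a b n)" .
  qed
  show "pv.span (mons a b n :: 'a poly set) \<subseteq> Aw a b n"
  proof (rule pv.span_minimal)
    show "mons a b n \<subseteq> (Aw a b n :: 'a poly set)"
      by (auto simp: mons_def Aw_def coeff_monom split: if_splits)
  qed (rule Aw_subspace)
qed

lemma finite_mons: "finite (mons a b n)"
  unfolding mons_def using finite_win by simp

lemma card_mons: "card (mons a b n :: 'a::field poly set) = card {j. inwin a b n j}"
  unfolding mons_def by (rule card_image) (auto simp: inj_on_def monom_eq_iff')

lemma card_win_sym:
  assumes "1 \<le> b" "n \<le> a + b - 2"
  shows "card {j. inwin a b (a + b - 2 - n) j} = card {j. inwin a b n j}"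
proof -
  have "bij_betw (\<lambda>j. b - 1 - j) {j. inwin a b n j} {j. inwin a b (a + b - 2 - n) j}"
  proof (rule bij_betw_byWitness[where f' = "\<lambda>j. b - 1 - j"])
    show "\<forall>x\<in>{j. inwin a b n j}. b - 1 - (b - 1 - x) = x" using assms by (auto simp: inwin_def)
    show "\<forall>x\<in>{j. inwin a b (a + b - 2 - n) j}. b - 1 - (b - 1 - x) = x" using assms by (auto simp: inwin_def)
    show "(\<lambda>j. b - 1 - j) ` {j. inwin a b n j} \<subseteq> {j. inwin a b (a + b - 2 - n) j}"
      using assms by (auto simp: inwin_def)
    show "(\<lambda>j. b - 1 - j) ` {j. inwin a b (a + b - 2 - n) j} \<subseteq> {j. inwin a b n j}"
      using assms by (auto simp: inwin_def)
  qed
  then show ?thesis by (simp add: bij_betw_same_card)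
qed

lemma pr_Wn:
  assumes a: "1 \<le> a" and b: "1 \<le> b" and n: "n \<le> a + b - 2" and dg: "degree g \<le> a + b - 2 - n" and dh: "degree h \<le> n"
  shows "pr b g h = pr b g (Wn a b n h)"
proof -
  have "pr b g h - pr b g (Wn a b n h) = coeff (g * (h - Wn a b n h)) (b - 1)"
    unfolding pr_def by (simp add: algebra_simps)
  also have "\<dots> = (\<Sum>k\<le>b - 1. coeff g k * coeff (h - Wn a b n h) (b - 1 - k))"
    by (rule coeff_mult)
  also have "\<dots> = 0"
  proof (rule sum.neutral, intro ballI)
    fix k assume k: "k \<in> {..b - 1}"
    show "coeff g k * coeff (h - Wn a b n h) (b - 1 - k) = 0"
    proof (cases "coeff g k = 0")
      case False
      then have "k \<le> a + b - 2 - n" using dg le_degree order_trans by blast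
      then have "coeff (h - Wn a b n h) (b - 1 - k) = 0"
        using dh a b n k coeff_eq_0[of h "b - 1 - k"]
        by (auto simp: coeff_Wn inwin_def)
      then show ?thesis by simp
    qed simp
  qed
  finally show ?thesis by simp
qed

lemma pr_monom:
  assumes "j < b"
  shows "pr b (monom 1 (b - 1 - j)) f = coeff f j"
  using assms unfolding pr_def by (simp add: coeff_monom_mult)

lemma pr_zero_subspace: "pv.subspace {u. pr b g u = 0}"
  unfolding pv.subspace_def pr_def by (simp add: algebra_simps)


lemma span_monos_coeff:
  "pv.span ((\<lambda>k. monom 1 k) ` T :: 'a::field poly set) \<subseteq> {p. \<forall>j. j \<notin> T \<longrightarrow> coeff p j = 0}"
proof (rule pv.span_minimal)
  show "pv.subspace {p::'a poly. \<forall>j. j \<notin> T \<longrightarrow> coeff p j = 0}"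
    unfolding pv.subspace_def by auto
qed (auto simp: coeff_monom)

lemma monos_indep: "pv.independent ((\<lambda>k. monom 1 k) ` T :: 'a::field poly set)"
proof
  assume "pv.dependent ((\<lambda>k. monom 1 k) ` T :: 'a poly set)"
  then obtain j where j: "j \<in> T" "monom 1 j \<in> pv.span ((\<lambda>k. monom 1 k) ` T - {monom 1 j} :: 'a poly set)"
    unfolding pv.dependent_def by blast
  have "(\<lambda>k. monom 1 k) ` T - {monom 1 j} \<subseteq> ((\<lambda>k. monom 1 k) ` (T - {j}) :: 'a poly set)" by auto
  then have "monom 1 j \<in> pv.span ((\<lambda>k. monom 1 k) ` (T - {j}) :: 'a poly set)"
    using j(2) pv.span_mono by blast
  then have "coeff (monom 1 j :: 'a poly) j = 0" using span_monos_coeff by blast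
  then show False by simp
qed

lemma lemmaF3:
  fixes U :: "'a::field poly set"
  assumes a: "1 \<le> a" and b: "1 \<le> b" and n: "n \<le> a + b - 2"
    and Us: "pv.subspace U" and UA: "U \<subseteq> Aw a b n"
    and perp: "\<forall>g\<in>Aw a b (a + b - 2 - n). (\<forall>u\<in>U. pr b g u = 0) \<longrightarrow> g = 0"
  shows "Aw a b n \<subseteq> U"
proof -
  obtain B where BU: "B \<subseteq> U" and iB: "pv.independent B" and UB: "U \<subseteq> pv.span B"
    and "card B = pv.dim U" by (rule pv.basis_exists[of U])
  have AwS: "Aw a b n = pv.span (mons a b n :: 'a poly set)" by (rule Aw_span)
  have AwS2: "Aw a b (a + b - 2 - n) = pv.span (mons a b (a + b - 2 - n) :: 'a poly set)" by (rule Aw_span)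
  have Bsp: "B \<subseteq> pv.span (mons a b n)" using BU UA unfolding AwS by (rule subset_trans)
  have fB: "finite B" using pv.independent_span_bound[OF finite_mons iB Bsp] by simp
  obtain e where e: "bij_betw e B {0..<card B}" using ex_bij_betw_finite_nat[OF fB] by blast
  define \<rho> where "\<rho> g = (\<Sum>u\<in>B. smult (pr b g u) (monom 1 (e u)))" for g :: "'a poly"
  have prA: "pr b (x + y) u = pr b x u + pr b y u" for x y u
    by (simp add: pr_def distrib_right)
  have prS: "pr b (smult c x) u = c * pr b x u" for c x u
    by (simp add: pr_def)
  have \<rho>hom: "module_hom smult smult \<rho>"
    unfolding pv_linear_iff
  proof (intro conjI allI)
    fix x y show "\<rho> (x + y) = \<rho> x + \<rho> y"
      unfolding \<rho>_def prA smult_add_left by (rule sum.distrib)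
  next
    fix c x show "\<rho> (smult c x) = smult c (\<rho> x)"
      unfolding \<rho>_def prS pv.scale_sum_right by (simp add: smult_smult)
  qed
  interpret R: module_hom smult smult \<rho> by (rule \<rho>hom)
  have coeff\<rho>: "coeff (\<rho> g) (e u) = pr b g u" if u: "u \<in> B" for g u
  proof -
    have "coeff (\<rho> g) (e u) = (\<Sum>v\<in>B. if v = u then pr b g v else 0)"
      unfolding \<rho>_def coeff_sum
    proof (rule sum.cong[OF refl])
      fix v assume v: "v \<in> B"
      have "e v = e u \<longleftrightarrow> v = u" using e u v unfolding bij_betw_def inj_on_def by blast
      then show "coeff (smult (pr b g v) (monom 1 (e v))) (e u) = (if v = u then pr b g v else 0)"
        by (auto simp: coeff_monom)
    qed
    also have "\<dots> = pr b g u" using fB u by (simp add: sum.delta')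
    finally show ?thesis .
  qed
  let ?S = "Aw a b (a + b - 2 - n) :: 'a poly set"
  have inj: "inj_on \<rho> (pv.span (mons a b (a + b - 2 - n)))"
  proof (subst R.inj_on_iff_eq_0)
    show "pv.subspace (pv.span (mons a b (a + b - 2 - n)))" by simp
    show "\<forall>x\<in>pv.span (mons a b (a + b - 2 - n)). \<rho> x = 0 \<longrightarrow> x = 0"
    proof (intro ballI impI)
      fix g assume g: "g \<in> pv.span (mons a b (a + b - 2 - n))" and r0: "\<rho> g = 0"
      have "\<forall>u\<in>B. pr b g u = 0"
      proof
        fix u assume u: "u \<in> B"
        have "pr b g u = coeff (\<rho> g) (e u)" using coeff\<rho>[OF u] by simp
        then show "pr b g u = 0" using r0 by simp
      qed
      then have "B \<subseteq> {u. pr b g u = 0}" by auto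
      then have "pv.span B \<subseteq> {u. pr b g u = 0}" by (rule pv.span_minimal[OF _ pr_zero_subspace])
      then have "\<forall>u\<in>U. pr b g u = 0" using UB by blast
      moreover have "g \<in> ?S" using g unfolding AwS2 .
      ultimately show "g = 0" using perp by blast
    qed
  qed
  have iR: "pv.independent (\<rho> ` mons a b (a + b - 2 - n))"
    using R.independent_injective_image[OF _ inj] monos_indep unfolding mons_def by blast
  have cR: "card (\<rho> ` mons a b (a + b - 2 - n)) = card (mons a b (a + b - 2 - n) :: 'a poly set)"
    using card_image[OF inj_on_subset[OF inj pv.span_superset]] .
  have sR: "\<rho> ` mons a b (a + b - 2 - n) \<subseteq> pv.span ((\<lambda>k. monom 1 k) ` {0..<card B})"
  proof
    fix x assume "x \<in> \<rho> ` mons a b (a + b - 2 - n)"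
    then obtain g where x: "x = \<rho> g" by blast
    have "e u \<in> {0..<card B}" if "u \<in> B" for u using e that unfolding bij_betw_def by blast
    then show "x \<in> pv.span ((\<lambda>k. monom 1 k) ` {0..<card B})"
      unfolding x \<rho>_def by (intro pv.span_sum pv.span_scale pv.span_base) auto
  qed
  have "card (\<rho> ` mons a b (a + b - 2 - n)) \<le> card ((\<lambda>k. monom 1 k :: 'a poly) ` {0..<card B})"
    using pv.independent_span_bound[OF _ iR sR] by simp
  also have "\<dots> \<le> card B" using card_image_le[of "{0..<card B}"] by simp
  finally have "card (mons a b (a + b - 2 - n) :: 'a poly set) \<le> card B" using cR by simp
  then have "card (mons a b n :: 'a poly set) \<le> card B"
  proof -
    have "card (mons a b n :: 'a poly set) = card (mons a b (a + b - 2 - n) :: 'a poly set)"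
      unfolding card_mons using card_win_sym[OF b n] by simp
    then show ?thesis using \<open>card (mons a b (a + b - 2 - n) :: 'a poly set) \<le> card B\<close> by simp
  qed
  then have "pv.span (mons a b n) \<subseteq> pv.span B" using helperH[OF finite_mons iB Bsp] by simp
  also have "\<dots> \<subseteq> U" using pv.span_minimal[OF BU Us] .
  finally show ?thesis unfolding AwS .
qed



lemma pr_diff: "pr b (q - v) f = pr b q f - pr b v f"
  by (simp add: pr_def algebra_simps)

lemma degree_lin_pow: "degree ([:-c,1:] ^ k :: 'a::field poly) = k"
  by (simp add: degree_power_eq)

lemma Wn_mult_hom: "module_hom smult smult (\<lambda>f::'a::field poly. Wn a b n (r * f))"
  unfolding pv_linear_iff by (simp add: distrib_left Wn_add Wn_smult)

theorem core:
  fixes Iu :: "nat \<Rightarrow> 'a::field_char_0 poly set" and a b :: nat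
  assumes a: "1 \<le> a" and b: "1 \<le> b"
    and sub: "\<And>n. pv.subspace (Iu n)"
    and inA: "\<And>n. Iu n \<subseteq> Aw a b n"
    and clo: "\<And>n d c f. f \<in> Iu n \<Longrightarrow> Wn a b (n + d) ([:-c,1:] ^ d * f) \<in> Iu (n + d)"
  shows "\<exists>c. \<forall>i d. 0 < d \<longrightarrow>
     inj_on (\<lambda>f. Wn a b (i + d) ([:-c,1:] ^ d * f)) (Iu i) \<or>
     (\<lambda>f. Wn a b (i + d) ([:-c,1:] ^ d * f)) ` Iu i = Iu (i + d)"
proof -
  define N where "N = a + b - 2"
  have N: "a + b - 2 = N" using N_def by simp
  note prW = pr_Wn[OF a b, unfolded N]
  note F3 = lemmaF3[OF a b, unfolded N]
  note Awb = Aw_big[of a b, unfolded N]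
  define V where "V i = {g. degree g \<le> N - i \<and> (\<forall>f\<in>Iu i. pr b g f = 0)}" for i
  have Vsub: "pv.subspace (V i)" for i
    unfolding pv.subspace_def V_def
    by (auto simp: pr_def algebra_simps intro: order_trans[OF degree_add_le_max] order_trans[OF degree_smult_le])
  define Bs where "Bs i = (SOME B. B \<subseteq> V i \<and> pv.independent B \<and> V i \<subseteq> pv.span B)" for i
  have Bs: "Bs i \<subseteq> V i \<and> pv.independent (Bs i) \<and> V i \<subseteq> pv.span (Bs i)" for i
  proof -
    obtain B where "B \<subseteq> V i" "pv.independent B" "V i \<subseteq> pv.span B" "card B = pv.dim (V i)"
      by (rule pv.basis_exists)
    then have "\<exists>B. B \<subseteq> V i \<and> pv.independent B \<and> V i \<subseteq> pv.span B" by blast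
    then show ?thesis unfolding Bs_def by (rule someI_ex)
  qed
  have spanBs: "pv.span (Bs i) = V i" for i
    using Bs[of i] pv.span_minimal[OF _ Vsub[of i]] by blast
  have Vmon: "V i \<subseteq> pv.span ((\<lambda>k. monom 1 k) ` {..<N - i + 1})" for i
  proof
    fix g assume "g \<in> V i"
    then have "degree g < N - i + 1" unfolding V_def by simp
    then show "g \<in> pv.span ((\<lambda>k. monom 1 k) ` {..<N - i + 1})" by (intro monos_span_degree) simp
  qed
  have finBs: "finite (Bs i) \<and> card (Bs i) \<le> N - i + 1" for i
  proof -
    have "Bs i \<subseteq> pv.span ((\<lambda>k. monom 1 k :: 'a poly) ` {..<N - i + 1})" using Bs[of i] Vmon[of i] by blast
    from pv.independent_span_bound[OF _ _ this] Bs[of i]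
    have "finite (Bs i) \<and> card (Bs i) \<le> card ((\<lambda>k. monom 1 k :: 'a poly) ` {..<N - i + 1})" by simp
    moreover have "card ((\<lambda>k. monom 1 k :: 'a poly) ` {..<N - i + 1}) \<le> N - i + 1"
      using card_image_le[of "{..<N - i + 1}"] by simp
    ultimately show ?thesis by linarith
  qed
  define bad where "bad i = {c. \<exists>p\<in>pv.span (Bs i). p \<noteq> 0 \<and> [:-c,1:] ^ card (Bs i) dvd p}" for i
  have finbad: "finite (bad i)" for i
    unfolding bad_def using lemmaG_aux[of "Bs i" "card (Bs i)"] finBs Bs by blast
  have "finite (\<Union>i\<le>N. bad i)" using finbad by simp
  then obtain c where c: "c \<notin> (\<Union>i\<le>N. bad i)"
    using ex_new_if_finite[OF infinite_UNIV_char_0] by blast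
  let ?r = "[:-c,1:] :: 'a poly"
  show ?thesis
  proof (intro exI allI impI)
    fix i d :: nat assume d: "0 < d"
    let ?F = "\<lambda>f. Wn a b (i + d) (?r ^ d * f)"
    show "inj_on ?F (Iu i) \<or> ?F ` Iu i = Iu (i + d)"
    proof (cases "N < i")
      case True
      then have "Aw a b i = ({0} :: 'a poly set)" using Aw_big[of a b i] N_def by simp
      then have "Iu i \<subseteq> {0}" using inA[of i] by simp
      then have "inj_on ?F (Iu i)" by (auto simp: inj_on_def)
      then show ?thesis ..
    next
      case False
      then have iN: "i \<le> N" by simp
      define B where "B = Bs i"
      define m where "m = card B"
      have fB: "finite B" and mb: "m \<le> N - i + 1" using finBs[of i] unfolding B_def m_def by auto
      have iB: "pv.independent B" using Bs[of i] unfolding B_def by simp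
      have spB: "pv.span B = V i" using spanBs unfolding B_def .
      have good: "\<forall>v\<in>pv.span B. v \<noteq> 0 \<longrightarrow> \<not> ?r ^ card B dvd v"
        using c iN unfolding bad_def B_def by blast
      show ?thesis
      proof (cases "d < m")
        case True
        have dm: "d < m" using True .
        interpret F: module_hom smult smult ?F by (rule Wn_mult_hom)
        have idN: "i + d \<le> N" using dm mb iN by linarith
        have z: "\<forall>f\<in>Iu i. ?F f = 0 \<longrightarrow> f = 0"
        proof (intro ballI impI)
          fix f assume fI: "f \<in> Iu i" and F0: "?F f = 0"
          have fA: "f \<in> Aw a b i" using inA fI by blast
          have df: "degree f \<le> i" using Aw_degree[OF fA] .
          show "f = 0"
          proof (rule poly_eqI)
            fix j
            show "coeff f j = coeff 0 j"
            proof (cases "inwin a b i j")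
              case False
              then show ?thesis using fA unfolding Aw_def by auto
            next
              case True
              then have jb: "j < b" and ij: "i < a + j" by (auto simp: inwin_def)
              define q where "q = (monom 1 (b - 1 - j) :: 'a poly)"
              have dq: "degree q \<le> N - i" unfolding q_def N_def using jb ij by (simp add: degree_monom_eq)
              obtain v where v: "v \<in> pv.span B" "?r ^ card B dvd (q - v)"
                using lemmaF2[OF fB iB good] by blast
              then obtain w where w: "q - v = ?r ^ m * w" unfolding m_def by (auto elim: dvdE)
              have vV: "v \<in> V i" using v(1) spB by simp
              have dv: "degree v \<le> N - i" using vV unfolding V_def by simp
              have dqv: "degree (q - v) \<le> N - i" using dq dv by (rule degree_diff_le)
              define g' where "g' = ?r ^ (m - d) * w"
              have dg: "degree g' \<le> N - (i + d)"
              proof (cases "w = 0")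
                case True then show ?thesis by (simp add: g'_def)
              next
                case False
                have "degree (?r ^ m * w) = m + degree w" using False by (simp add: degree_mult_eq degree_lin_pow)
                then have "m + degree w \<le> N - i" using dqv w by simp
                moreover have "degree g' = (m - d) + degree w" using False by (simp add: g'_def degree_mult_eq degree_lin_pow)
                ultimately show ?thesis using dm by linarith
              qed
              have rr: "?r ^ m = ?r ^ (m - d) * ?r ^ d" using dm by (simp add: power_add[symmetric])
              have drf: "degree (?r ^ d * f) \<le> i + d"
                using degree_mult_le[of "?r ^ d" f] df by (simp add: degree_lin_pow)
              have p1: "pr b v f = 0" using vV fI unfolding V_def by simp
              have p2: "pr b (q - v) f = pr b g' (?r ^ d * f)"
                unfolding pr_def w rr g'_def by (simp add: algebra_simps)
              have p3: "pr b g' (?r ^ d * f) = pr b g' (?F f)"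
                by (rule prW[OF idN dg drf])
              have p4: "pr b g' (?F f) = 0" using F0 by (simp add: pr_def)
              have "coeff f j = pr b q f" unfolding q_def using pr_monom[OF jb, of f] by simp
              also have "\<dots> = pr b (q - v) f + pr b v f" by (simp add: pr_diff)
              also have "\<dots> = 0" using p1 p2 p3 p4 by simp
              finally show ?thesis by simp
            qed
          qed
        qed
        have "inj_on ?F (Iu i)" using z F.inj_on_iff_eq_0[OF sub[of i]] by blast
        then show ?thesis ..
      next
        case False
        have dm: "m \<le> d" using False by simp
        have "?F ` Iu i = Iu (i + d)"
        proof
          show "?F ` Iu i \<subseteq> Iu (i + d)" using clo by blast
          show "Iu (i + d) \<subseteq> ?F ` Iu i"
          proof (cases "N < i + d")
            case True
            then have "Aw a b (i + d) = ({0} :: 'a poly set)" by (rule Awb)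
            then have "Iu (i + d) \<subseteq> {0}" using inA[of "i + d"] by simp
            moreover have "0 \<in> ?F ` Iu i" using pv.subspace_0[OF sub[of i]] by (intro image_eqI[where x=0]) simp_all
            ultimately show ?thesis by blast
          next
            case False
            then have idN: "i + d \<le> N" by simp
            interpret F: module_hom smult smult ?F by (rule Wn_mult_hom)
            have Us: "pv.subspace (?F ` Iu i)" by (rule F.subspace_image[OF sub])
            have UA: "?F ` Iu i \<subseteq> Aw a b (i + d)" using Wn_in_Aw by blast
            have perp: "\<forall>g\<in>Aw a b (N - (i + d)). (\<forall>u\<in>?F ` Iu i. pr b g u = 0) \<longrightarrow> g = 0"
            proof (intro ballI impI)
              fix g assume gA: "g \<in> Aw a b (N - (i + d))" and gp: "\<forall>u\<in>?F ` Iu i. pr b g u = 0"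
              define h where "h = ?r ^ d * g"
              have dg: "degree g \<le> N - (i + d)" using Aw_degree[OF gA] .
              have dh: "degree h \<le> N - i"
                using degree_mult_le[of "?r ^ d" g] dg idN unfolding h_def by (simp add: degree_lin_pow)
              have "\<forall>f\<in>Iu i. pr b h f = 0"
              proof
                fix f assume fI: "f \<in> Iu i"
                have fA: "f \<in> Aw a b i" using inA fI by blast
                have drf: "degree (?r ^ d * f) \<le> i + d"
                  using degree_mult_le[of "?r ^ d" f] Aw_degree[OF fA] by (simp add: degree_lin_pow)
                have "pr b h f = pr b g (?r ^ d * f)" by (simp add: pr_def h_def algebra_simps)
                also have "\<dots> = pr b g (?F f)" by (rule prW[OF idN dg drf])
                also have "\<dots> = 0" using gp fI by blast
                finally show "pr b h f = 0" .
              qed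
              then have "h \<in> V i" using dh unfolding V_def by simp
              then have "h \<in> pv.span B" using spB by simp
              moreover have "?r ^ card B dvd h"
              proof -
                have "?r ^ card B dvd ?r ^ d" using dm unfolding m_def by (rule le_imp_power_dvd)
                then show ?thesis unfolding h_def by (rule dvd_mult2)
              qed
              ultimately have "h = 0" using good by blast
              then show "g = 0" unfolding h_def by simp
            qed
            have "Aw a b (i + d) \<subseteq> ?F ` Iu i" by (rule F3[OF idN Us UA perp])
            then show ?thesis using inA[of "i + d"] by blast
          qed
        qed
        then show ?thesis ..
      qed
    qed
  qed
qed



lemma cx_ext: "(\<And>i j. cx p i j = cx q i j) \<Longrightarrow> p = q"
  unfolding cx_def by (intro poly_eqI) blast

lemma cx_trunc: "cx (trunc a b p) i j = (if enat i < a \<and> enat j < b then cx p i j else 0)"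
proof -
  have c1: "coeff (trunc a b p) j = (if j \<le> degree p then (\<Sum>i'\<le>degree (coeff p j).
       if enat i' < a \<and> enat j < b then monom (coeff (coeff p j) i') i' else 0) else 0)"
    unfolding trunc_def by (simp add: coeff_sum coeff_monom if_distrib sum.delta cong: if_cong)
  show ?thesis
  proof (cases "j \<le> degree p")
    case False
    then have "coeff p j = 0" by (simp add: coeff_eq_0)
    then show ?thesis using False c1 by (simp add: cx_def)
  next
    case True
    have "cx (trunc a b p) i j = (\<Sum>i'\<le>degree (coeff p j).
       coeff (if enat i' < a \<and> enat j < b then monom (coeff (coeff p j) i') i' else 0) i)"
      unfolding cx_def c1 using True by (simp add: coeff_sum)
    also have "\<dots> = (\<Sum>i'\<le>degree (coeff p j). if i' = i then (if enat i < a \<and> enat j < b then coeff (coeff p j) i else 0) else 0)"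
      by (intro sum.cong) (auto simp: coeff_monom)
    also have "\<dots> = (if i \<le> degree (coeff p j) then (if enat i < a \<and> enat j < b then coeff (coeff p j) i else 0) else 0)"
      by (simp add: sum.delta)
    also have "\<dots> = (if enat i < a \<and> enat j < b then cx p i j else 0)"
      by (auto simp: cx_def coeff_eq_0)
    finally show ?thesis .
  qed
qed

lemma cx_mult: "cx (p * q) i j = (\<Sum>j1\<le>j. \<Sum>i1\<le>i. cx p i1 j1 * cx q (i - i1) (j - j1))"
  unfolding cx_def by (simp add: coeff_mult coeff_sum)

lemma cx_add: "cx (p + q) i j = cx p i j + cx q i j" by (simp add: cx_def)
lemma cx_0[simp]: "cx 0 i j = 0" by (simp add: cx_def)

lemma trunc_mult_trunc: "trunc a b (trunc a b p * q) = trunc a b (p * q)"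
proof (rule cx_ext)
  fix i j
  show "cx (trunc a b (trunc a b p * q)) i j = cx (trunc a b (p * q)) i j"
  proof (cases "enat i < a \<and> enat j < b")
    case True
    have "cx (trunc a b p * q) i j = cx (p * q) i j"
      unfolding cx_mult
    proof (intro sum.cong refl)
      fix j1 i1 assume "j1 \<in> {..j}" "i1 \<in> {..i}"
      then have "enat i1 < a \<and> enat j1 < b" using True
        by (meson atMost_iff enat_ord_simps(1) le_less_trans)
      then show "cx (trunc a b p) i1 j1 * cx q (i - i1) (j - j1) = cx p i1 j1 * cx q (i - i1) (j - j1)"
        by (simp add: cx_trunc)
    qed
    then show ?thesis by (simp add: cx_trunc)
  next
    case False
    then show ?thesis unfolding cx_trunc[of a b "trunc a b p * q"] cx_trunc[of a b "p * q"]
      by (simp only: if_not_P[OF False] if_False)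
  qed
qed

lemma trunc_mult_trunc2: "trunc a b (p * trunc a b q) = trunc a b (p * q)"
  using trunc_mult_trunc[of a b q p] by (simp add: mult.commute)

lemma trunc_trunc: "trunc a b (trunc a b p) = trunc a b p"
  by (rule cx_ext) (simp add: cx_trunc)

lemma trunc_pow_mult: "trunc a b (trunc a b l ^ d * f) = trunc a b (l ^ d * f)"
proof (induction d arbitrary: f)
  case 0 then show ?case by simp
next
  case (Suc d)
  have "trunc a b (trunc a b l ^ Suc d * f) = trunc a b (trunc a b l * (trunc a b l ^ d * f))"
    by (simp add: mult.assoc)
  also have "\<dots> = trunc a b (l * (trunc a b l ^ d * f))" by (rule trunc_mult_trunc)
  also have "\<dots> = trunc a b (l * trunc a b (trunc a b l ^ d * f))" by (rule trunc_mult_trunc2[symmetric])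
  also have "\<dots> = trunc a b (l * trunc a b (l ^ d * f))" using Suc by simp
  also have "\<dots> = trunc a b (l * (l ^ d * f))" by (rule trunc_mult_trunc2)
  finally show ?case by (simp add: mult.assoc)
qed

lemma homogeneous_mult:
  assumes "homogeneous n p" "homogeneous m q"
  shows "homogeneous (n + m) (p * q)"
  unfolding homogeneous_def
proof (intro allI impI)
  fix i j assume "cx (p * q) i j \<noteq> 0"
  then obtain j1 i1 where j1: "j1 \<le> j" "i1 \<le> i" and nz: "cx p i1 j1 * cx q (i - i1) (j - j1) \<noteq> 0"
    unfolding cx_mult by (meson atMost_iff sum.not_neutral_contains_not_neutral)
  then have nz1: "cx p i1 j1 \<noteq> 0" and nz2: "cx q (i - i1) (j - j1) \<noteq> 0" by auto
  have "i1 + j1 = n" using assms(1) nz1 unfolding homogeneous_def by blast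
  moreover have "(i - i1) + (j - j1) = m" using assms(2) nz2 unfolding homogeneous_def by blast
  ultimately show "i + j = n + m" using j1 by simp
qed

lemma homogeneous_1: "homogeneous 0 (1 :: 'a::comm_ring_1 poly poly)"
  unfolding homogeneous_def cx_def by (auto simp: coeff_1 split: if_splits)

lemma homogeneous_pow: "homogeneous 1 l \<Longrightarrow> homogeneous d (l ^ d)"
proof (induction d)
  case 0 then show ?case by (simp add: homogeneous_1)
next
  case (Suc d)
  then show ?case using homogeneous_mult[of 1 l d "l ^ d"] by simp
qed

lemma homogeneous_trunc: "homogeneous n p \<Longrightarrow> homogeneous n (trunc a b p)"
  unfolding homogeneous_def by (simp add: cx_trunc)

lemma homogeneous_add: "homogeneous n p \<Longrightarrow> homogeneous n q \<Longrightarrow> homogeneous n (p + q)"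
  unfolding homogeneous_def cx_add by (metis add.right_neutral)

lemma homogeneous_0: "homogeneous n 0"
  unfolding homogeneous_def by simp

definition phi :: "'a::comm_ring_1 poly poly \<Rightarrow> 'a poly" where
  "phi p = map_poly (\<lambda>q. poly q 1) p"

lemma coeff_phi: "coeff (phi p) j = poly (coeff p j) 1"
  unfolding phi_def by (simp add: coeff_map_poly)

lemma phi_add: "phi (p + q) = phi p + phi q"
  by (rule poly_eqI) (simp add: coeff_phi)

lemma phi_mult: "phi (p * q) = phi p * phi q"
  by (rule poly_eqI) (simp add: coeff_phi coeff_mult poly_sum)

lemma phi_1: "phi 1 = 1"
  by (rule poly_eqI) (simp add: coeff_phi coeff_1)

lemma phi_pow: "phi (p ^ d) = phi p ^ d"
  by (induction d) (simp_all add: phi_1 phi_mult)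

lemma coeff_phi_hom:
  assumes "homogeneous n p"
  shows "coeff (phi p) j = (if j \<le> n then cx p (n - j) j else 0)"
proof -
  have "coeff (phi p) j = (\<Sum>i\<le>degree (coeff p j). coeff (coeff p j) i)"
    by (simp add: coeff_phi poly_altdef)
  also have "\<dots> = (\<Sum>i\<le>degree (coeff p j). if i = n - j \<and> j \<le> n then coeff (coeff p j) i else 0)"
  proof (intro sum.cong refl)
    fix i
    show "coeff (coeff p j) i = (if i = n - j \<and> j \<le> n then coeff (coeff p j) i else 0)"
    proof (cases "coeff (coeff p j) i = 0")
      case False
      then have "i + j = n" using assms unfolding homogeneous_def cx_def by blast
      then show ?thesis by auto
    qed auto
  qed
  also have "\<dots> = (if j \<le> n then cx p (n - j) j else 0)"
    by (auto simp: sum.delta cx_def coeff_eq_0 cong: if_cong)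
  finally show ?thesis .
qed

lemma phi_inj_hom:
  assumes "homogeneous n p" "homogeneous n q" "phi p = phi q"
  shows "p = q"
proof (rule cx_ext)
  fix i j
  show "cx p i j = cx q i j"
  proof (cases "i + j = n")
    case True
    have "coeff (phi p) j = coeff (phi q) j" using assms(3) by simp
    moreover have "i = n - j" "j \<le> n" using True by auto
    ultimately show ?thesis using True coeff_phi_hom[OF assms(1), of j] coeff_phi_hom[OF assms(2), of j]
      by (simp add: add.commute)
  next
    case False
    then show ?thesis using assms(1,2) unfolding homogeneous_def by metis
  qed
qed



lemma phi_trunc:
  assumes "homogeneous n p"
  shows "phi (trunc (enat a) (enat b) p) = Wn a b n (phi p)"
proof (rule poly_eqI)
  fix j
  have h: "homogeneous n (trunc (enat a) (enat b) p)" using homogeneous_trunc[OF assms] .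
  show "coeff (phi (trunc (enat a) (enat b) p)) j = coeff (Wn a b n (phi p)) j"
    unfolding coeff_phi_hom[OF h] coeff_Wn coeff_phi_hom[OF assms] cx_trunc
    by (auto simp: inwin_def)
qed

lemma phi_0[simp]: "phi 0 = 0" by (simp add: phi_def)

lemma cx_smult_const: "cx (smult [:c:] p) i j = c * cx p i j"
  by (simp add: cx_def)

lemma phi_smult_const: "phi (smult [:c:] p) = smult c (phi p)"
  by (rule poly_eqI) (simp add: coeff_phi)

lemma const_mult: "[:[:c:]:] * p = smult [:c:] p"
  by simp

lemma trunc_smult_const: "trunc a b (smult [:c:] p) = smult [:c:] (trunc a b p)"
  by (rule cx_ext) (simp add: cx_smult_const cx_trunc)

lemma homogeneous_smult_const: "homogeneous n p \<Longrightarrow> homogeneous n (smult [:c:] p)"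
  unfolding homogeneous_def cx_smult_const by (metis mult_zero_right)

definition Lc :: "'a::comm_ring_1 \<Rightarrow> 'a poly poly" where
  "Lc c = [:[:0, -c:], 1:]"

lemma phi_Lc: "phi (Lc c) = [:-c, 1:]"
  by (rule poly_eqI) (auto simp: coeff_phi Lc_def coeff_pCons split: nat.splits)

lemma homogeneous_Lc: "homogeneous 1 (Lc c)"
  unfolding homogeneous_def cx_def Lc_def
  by (auto simp: coeff_pCons split: nat.splits)

lemma CL_ring_trunc: "trunc a b p \<in> CL_ring a b"
  unfolding CL_ring_def by (simp add: trunc_trunc)

lemma finite_case:
  fixes I :: "'k::field_char_0 poly poly set" and a b :: nat
  assumes I: "CL_homog_ideal (enat a) (enat b) I" and a: "1 \<le> a" and b: "1 \<le> b"
  shows "strong_lefschetz (enat a) (enat b) I"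
proof -
  let ?A = "enat a" and ?B = "enat b"
  let ?gp = "graded_piece I"
  have IR: "I \<subseteq> CL_ring ?A ?B" and I0: "0 \<in> I" and Iadd: "\<And>p q. p \<in> I \<Longrightarrow> q \<in> I \<Longrightarrow> p + q \<in> I"
    and Imul: "\<And>r p. r \<in> CL_ring ?A ?B \<Longrightarrow> p \<in> I \<Longrightarrow> CL_mult ?A ?B r p \<in> I"
    using I unfolding CL_homog_ideal_def by auto
  have trI: "trunc ?A ?B p = p" if "p \<in> I" for p using IR that unfolding CL_ring_def by blast
  have Ismult: "smult [:c:] p \<in> I" if p: "p \<in> I" for c p
  proof -
    have "CL_mult ?A ?B (trunc ?A ?B [:[:c:]:]) p \<in> I" by (rule Imul[OF CL_ring_trunc p])
    moreover have "CL_mult ?A ?B (trunc ?A ?B [:[:c:]:]) p = smult [:c:] p"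
      unfolding CL_mult_def trunc_mult_trunc const_mult trunc_smult_const trI[OF p] ..
    ultimately show ?thesis by simp
  qed
  have K: "trunc ?A ?B (Lc c ^ d * p) \<in> ?gp (n + d) \<and>
      phi (trunc ?A ?B (Lc c ^ d * p)) = Wn a b (n + d) ([:-c,1:] ^ d * phi p)"
    if p: "p \<in> ?gp n" for p c n d
  proof
    have pI: "p \<in> I" and hp: "homogeneous n p" using p unfolding graded_piece_def by auto
    have "CL_mult ?A ?B (trunc ?A ?B (Lc c ^ d)) p \<in> I" by (rule Imul[OF CL_ring_trunc pI])
    then have qI: "trunc ?A ?B (Lc c ^ d * p) \<in> I" unfolding CL_mult_def trunc_mult_trunc .
    have hm: "homogeneous (n + d) (Lc c ^ d * p)"
      using homogeneous_mult[OF homogeneous_pow[OF homogeneous_Lc] hp] by (simp add: add.commute)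
    show "trunc ?A ?B (Lc c ^ d * p) \<in> ?gp (n + d)"
      unfolding graded_piece_def using qI homogeneous_trunc[OF hm] by simp
    show "phi (trunc ?A ?B (Lc c ^ d * p)) = Wn a b (n + d) ([:-c,1:] ^ d * phi p)"
      unfolding phi_trunc[OF hm] phi_mult phi_pow phi_Lc ..
  qed
  define Iu where "Iu n = phi ` ?gp n" for n
  have sub: "pv.subspace (Iu n)" for n
    unfolding pv.subspace_def
  proof (intro conjI ballI allI)
    show "0 \<in> Iu n" unfolding Iu_def graded_piece_def using I0 homogeneous_0
      by (intro image_eqI[where x = 0]) auto
  next
    fix x y assume "x \<in> Iu n" "y \<in> Iu n"
    then obtain p q where "p \<in> ?gp n" "q \<in> ?gp n" "x = phi p" "y = phi q" unfolding Iu_def by blast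
    then show "x + y \<in> Iu n" unfolding Iu_def graded_piece_def
      by (intro image_eqI[where x = "p + q"]) (auto simp: phi_add Iadd homogeneous_add)
  next
    fix c x assume "x \<in> Iu n"
    then obtain p where "p \<in> ?gp n" "x = phi p" unfolding Iu_def by blast
    then show "smult c x \<in> Iu n" unfolding Iu_def graded_piece_def
      by (intro image_eqI[where x = "smult [:c:] p"]) (auto simp: phi_smult_const Ismult homogeneous_smult_const)
  qed
  have inA: "Iu n \<subseteq> Aw a b n" for n
  proof
    fix x assume "x \<in> Iu n"
    then obtain p where p: "p \<in> ?gp n" "x = phi p" unfolding Iu_def by blast
    have pI: "p \<in> I" and hp: "homogeneous n p" using p unfolding graded_piece_def by auto
    show "x \<in> Aw a b n" unfolding Aw_def
    proof (intro CollectI allI impI)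
      fix j assume "coeff x j \<noteq> 0"
      then have j: "j \<le> n" and nz: "cx p (n - j) j \<noteq> 0" using coeff_phi_hom[OF hp, of j] p(2)
        by (auto split: if_splits)
      have "cx (trunc ?A ?B p) (n - j) j \<noteq> 0" using nz trI[OF pI] by simp
      then have "n - j < a" "j < b" unfolding cx_trunc by (auto split: if_splits)
      then show "inwin a b n j" using j unfolding inwin_def by auto
    qed
  qed
  have clo: "Wn a b (n + d) ([:-c,1:] ^ d * f) \<in> Iu (n + d)" if "f \<in> Iu n" for n d c f
  proof -
    obtain p where p: "p \<in> ?gp n" "f = phi p" using \<open>f \<in> Iu n\<close> unfolding Iu_def by blast
    show ?thesis using K[OF p(1), of c d] p(2) unfolding Iu_def by (metis image_eqI)
  qed
  obtain c where c: "\<forall>i d. 0 < d \<longrightarrow>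
     inj_on (\<lambda>f. Wn a b (i + d) ([:-c,1:] ^ d * f)) (Iu i) \<or>
     (\<lambda>f. Wn a b (i + d) ([:-c,1:] ^ d * f)) ` Iu i = Iu (i + d)"
    using core[OF a b sub inA clo] by blast
  define l where "l = trunc ?A ?B (Lc c)"
  have l1: "l \<in> graded_piece (CL_ring ?A ?B) 1"
    unfolding l_def graded_piece_def using CL_ring_trunc homogeneous_trunc[OF homogeneous_Lc] by blast
  show ?thesis
    unfolding strong_lefschetz_def
  proof (intro bexI[OF _ l1] allI impI)
    fix d i :: nat assume d: "0 < d"
    let ?G = "\<lambda>f. trunc ?A ?B (l ^ d * f)"
    let ?F = "\<lambda>f. Wn a b (i + d) ([:-c,1:] ^ d * f)"
    have G: "?G f = trunc ?A ?B (Lc c ^ d * f)" for f unfolding l_def by (rule trunc_pow_mult)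
    have hom: "homogeneous k q" if "q \<in> ?gp k" for q k using that unfolding graded_piece_def by simp
    from c d have "inj_on ?F (Iu i) \<or> ?F ` Iu i = Iu (i + d)" by blast
    then show "inj_on ?G (?gp i) \<or> ?G ` ?gp i = ?gp (i + d)"
    proof
      assume inj: "inj_on ?F (Iu i)"
      have "inj_on ?G (?gp i)"
      proof (rule inj_onI)
        fix f1 f2 assume f1: "f1 \<in> ?gp i" and f2: "f2 \<in> ?gp i" and eq: "?G f1 = ?G f2"
        have "?F (phi f1) = ?F (phi f2)" using eq K[OF f1, of c d] K[OF f2, of c d] unfolding G by simp
        moreover have "phi f1 \<in> Iu i" "phi f2 \<in> Iu i" using f1 f2 unfolding Iu_def by auto
        ultimately have "phi f1 = phi f2" using inj unfolding inj_on_def by blast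
        then show "f1 = f2" using phi_inj_hom hom[OF f1] hom[OF f2] by blast
      qed
      then show ?thesis ..
    next
      assume surj: "?F ` Iu i = Iu (i + d)"
      have "?G ` ?gp i = ?gp (i + d)"
      proof
        show "?G ` ?gp i \<subseteq> ?gp (i + d)" using K unfolding G by blast
        show "?gp (i + d) \<subseteq> ?G ` ?gp i"
        proof
          fix q assume q: "q \<in> ?gp (i + d)"
          then have "phi q \<in> ?F ` Iu i" using surj unfolding Iu_def by auto
          then obtain f where f: "f \<in> ?gp i" "phi q = ?F (phi f)" unfolding Iu_def by auto
          have "phi q = phi (?G f)" using f K[OF f(1), of c d] unfolding G by simp
          moreover have "?G f \<in> ?gp (i + d)" using K[OF f(1), of c d] unfolding G by simp
          ultimately have "q = ?G f" using phi_inj_hom hom[OF q] hom by blast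
          then show "q \<in> ?G ` ?gp i" using f(1) by blast
        qed
      qed
      then show ?thesis ..
    qed
  qed
qed



lemma zero_case:
  fixes I :: "'k::field poly poly set"
  assumes I: "CL_homog_ideal a b I" and ab: "a = 0 \<or> b = 0"
  shows "strong_lefschetz a b I"
proof -
  have tr0: "trunc a b p = 0" for p :: "'k poly poly"
    by (rule cx_ext) (use ab in \<open>auto simp: cx_trunc\<close>)
  have "I \<subseteq> CL_ring a b" using I unfolding CL_homog_ideal_def by blast
  then have I0: "I \<subseteq> {0}" unfolding CL_ring_def using tr0 by auto
  have l: "(0 :: 'k poly poly) \<in> graded_piece (CL_ring a b) 1"
    unfolding graded_piece_def CL_ring_def using tr0 homogeneous_0 by auto
  show ?thesis unfolding strong_lefschetz_def
  proof (intro bexI[OF _ l] allI impI disjI1)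
    fix d i :: nat
    have "graded_piece I i \<subseteq> {0}" using I0 unfolding graded_piece_def by auto
    then show "inj_on (\<lambda>f. trunc a b (0 ^ d * f)) (graded_piece I i)"
      by (auto simp: inj_on_def)
  qed
qed

lemma nzd_case:
  fixes I :: "'k::field poly poly set" and l :: "'k poly poly"
  assumes I: "CL_homog_ideal a b I" and l: "l \<in> graded_piece (CL_ring a b) 1" and l0: "l \<noteq> 0"
    and nzd: "\<And>d f. f \<in> CL_ring a b \<Longrightarrow> trunc a b (l ^ d * f) = l ^ d * f"
  shows "strong_lefschetz a b I"
proof -
  have IR: "I \<subseteq> CL_ring a b" using I unfolding CL_homog_ideal_def by blast
  show ?thesis unfolding strong_lefschetz_def
  proof (intro bexI[OF _ l] allI impI disjI1)
    fix d i :: nat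
    show "inj_on (\<lambda>f. trunc a b (l ^ d * f)) (graded_piece I i)"
    proof (rule inj_onI)
      fix f1 f2 assume f1: "f1 \<in> graded_piece I i" and f2: "f2 \<in> graded_piece I i"
        and eq: "trunc a b (l ^ d * f1) = trunc a b (l ^ d * f2)"
      have "f1 \<in> CL_ring a b" "f2 \<in> CL_ring a b" using f1 f2 IR unfolding graded_piece_def by auto
      then have "l ^ d * f1 = l ^ d * f2" using eq nzd by simp
      then show "f1 = f2" using l0 by simp
    qed
  qed
qed

lemma pow_var_y: "(var_y :: 'a::comm_ring_1 poly poly) ^ d = monom 1 d"
  unfolding var_y_def by (induction d) (simp_all add: monom_Suc)

lemma pow_var_x: "(var_x :: 'a::comm_ring_1 poly poly) ^ d = [:monom 1 d:]"
  unfolding var_x_def by (induction d) (simp_all add: monom_Suc)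

lemma cx_var_y_mult: "cx (var_y ^ d * f) i j = (if j < d then 0 else cx f i (j - d))"
  unfolding pow_var_y cx_def by (simp add: coeff_monom_mult)

lemma cx_var_x_mult: "cx (var_x ^ d * f) i j = (if i < d then 0 else cx f (i - d) j)"
  unfolding pow_var_x cx_def by (simp add: coeff_monom_mult)

lemma inCL:
  assumes "f \<in> CL_ring a b"
  shows "cx f i j = (if enat i < a \<and> enat j < b then cx f i j else 0)"
proof -
  have e: "trunc a b f = f" using assms unfolding CL_ring_def by simp
  have "cx f i j = cx (trunc a b f) i j" by (simp only: e)
  also have "\<dots> = (if enat i < a \<and> enat j < b then cx f i j else 0)" by (rule cx_trunc)
  finally show ?thesis .
qed

lemma cx_var_y: "cx (var_y :: 'k::comm_ring_1 poly poly) i j = (if i = 0 \<and> j = 1 then 1 else 0)"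
  unfolding var_y_def cx_def by (cases j; cases i) (auto simp: coeff_pCons split: nat.splits)

lemma cx_var_x: "cx (var_x :: 'k::comm_ring_1 poly poly) i j = (if i = 1 \<and> j = 0 then 1 else 0)"
  unfolding var_x_def cx_def by (cases j; cases i) (auto simp: coeff_pCons split: nat.splits)

lemma b_inf_case:
  fixes I :: "'k::field poly poly set"
  assumes I: "CL_homog_ideal a \<infinity> I" and a: "a \<noteq> 0"
  shows "strong_lefschetz a \<infinity> I"
proof (rule nzd_case[OF I, of var_y])
  have a0: "enat 0 < a" using a by (simp add: zero_enat_def[symmetric] zero_less_iff_neq_zero)
  have "trunc a \<infinity> (var_y :: 'k poly poly) = var_y"
  proof (rule cx_ext)
    fix i j
    show "cx (trunc a \<infinity> (var_y :: 'k poly poly)) i j = cx var_y i j"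
    proof (cases "i = 0 \<and> j = 1")
      case True then show ?thesis using a0 by (simp add: cx_trunc)
    next
      case False
      then have "cx (var_y :: 'k poly poly) i j = 0" by (simp add: cx_var_y)
      then show ?thesis by (simp add: cx_trunc)
    qed
  qed
  moreover have "homogeneous 1 (var_y :: 'k poly poly)" unfolding homogeneous_def cx_var_y by auto
  ultimately show "(var_y :: 'k poly poly) \<in> graded_piece (CL_ring a \<infinity>) 1"
    unfolding graded_piece_def CL_ring_def by simp
  show "(var_y :: 'k poly poly) \<noteq> 0" unfolding var_y_def by simp
  fix d and f :: "'k poly poly" assume f: "f \<in> CL_ring a \<infinity>"
  show "trunc a \<infinity> (var_y ^ d * f) = var_y ^ d * f"
  proof (rule cx_ext)
    fix i j
    show "cx (trunc a \<infinity> (var_y ^ d * f)) i j = cx (var_y ^ d * f) i j"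
    proof (cases "enat i < a")
      case True then show ?thesis by (simp add: cx_trunc)
    next
      case False
      have "cx f i (j - d) = 0" using inCL[OF f, of i "j - d"] False by simp
      then show ?thesis using False by (simp add: cx_trunc cx_var_y_mult)
    qed
  qed
qed

lemma a_inf_case:
  fixes I :: "'k::field poly poly set"
  assumes I: "CL_homog_ideal \<infinity> b I" and b: "b \<noteq> 0"
  shows "strong_lefschetz \<infinity> b I"
proof (rule nzd_case[OF I, of var_x])
  have b0: "enat 0 < b" using b by (simp add: zero_enat_def[symmetric] zero_less_iff_neq_zero)
  have "trunc \<infinity> b (var_x :: 'k poly poly) = var_x"
  proof (rule cx_ext)
    fix i j
    show "cx (trunc \<infinity> b (var_x :: 'k poly poly)) i j = cx var_x i j"
    proof (cases "i = 1 \<and> j = 0")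
      case True then show ?thesis using b0 by (simp add: cx_trunc)
    next
      case False
      then have "cx (var_x :: 'k poly poly) i j = 0" by (simp add: cx_var_x)
      then show ?thesis by (simp add: cx_trunc)
    qed
  qed
  moreover have "homogeneous 1 (var_x :: 'k poly poly)" unfolding homogeneous_def cx_var_x by auto
  ultimately show "(var_x :: 'k poly poly) \<in> graded_piece (CL_ring \<infinity> b) 1"
    unfolding graded_piece_def CL_ring_def by simp
  show "(var_x :: 'k poly poly) \<noteq> 0" unfolding var_x_def by simp
  fix d and f :: "'k poly poly" assume f: "f \<in> CL_ring \<infinity> b"
  show "trunc \<infinity> b (var_x ^ d * f) = var_x ^ d * f"
  proof (rule cx_ext)
    fix i j
    show "cx (trunc \<infinity> b (var_x ^ d * f)) i j = cx (var_x ^ d * f) i j"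
    proof (cases "enat j < b")
      case True then show ?thesis by (simp add: cx_trunc)
    next
      case False
      have "cx f (i - d) j = 0" using inCL[OF f, of "i - d" j] False by simp
      then show ?thesis using False by (simp add: cx_trunc cx_var_x_mult)
    qed
  qed
qed

theorem theorem3p9:
  fixes a b :: enat and I :: "'k::field_char_0 poly poly set"
  assumes "CL_homog_ideal a b I"
  shows "strong_lefschetz a b I"
proof (cases "a = 0 \<or> b = 0")
  case True
  then show ?thesis using zero_case[OF assms] by blast
next
  case False
  then have a0: "a \<noteq> 0" and b0: "b \<noteq> 0" by auto
  show ?thesis
  proof (cases "a = \<infinity>")
    case True
    then show ?thesis using a_inf_case[of b I] assms b0 by simp
  next
    case aF: False
    show ?thesis
    proof (cases "b = \<infinity>")
      case True
      then show ?thesis using b_inf_case[of a I] assms a0 by simp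
    next
      case False
      obtain a' where a': "a = enat a'" using aF by (cases a) auto
      obtain b' where b': "b = enat b'" using False by (cases b) auto
      have "1 \<le> a'" "1 \<le> b'" using a0 b0 a' b' by (auto simp: enat_0[symmetric])
      then show ?thesis using finite_case[of a' b' I] assms a' b' by simp
    qed
  qed
qed

end
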